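(* Identify the Fourier variable $(\xi_1,\xi_2)\in\mathbb{R}^2$ with $\xi = \xi_1 + i\xi_2 \in \mathbb{C}$ and the space variable $(x,y)$ with $z = x+iy$. Then $$\mathcal{F}^{-1}\left( \frac{1}{\xi} e^{-|\xi|^{2}} \right) = \frac{i}{x+iy}\left( 1 - e^{-(x^2+y^2)/4} \right),$$ and, for every integer $n \ge 0$, $$\mathcal{F}^{-1}\left( \frac{\overline{\xi}^{\,n}}{\xi} e^{-|\xi|^{2}} \right) = i(2i)^{n}\frac{n!}{z^{n+1}}\left\{ 1 - \exp\left(-\frac{|z|^{2}}{4}\right)\sum_{k=0}^{n}\frac{1}{k!}\left(\frac{z\bar z}{4}\right)^{k} \right\},$$ which is equivalent to $$\mathcal{F}^{-1}\left( \frac{\overline{\xi}^{\,n}}{\xi} e^{-|\xi|^{2}} \right) = i(2i)^{n}\, n!\, \exp\left(-\frac{|z|^{2}}{4}\right)\left(\frac{\bar z}{4}\right)^{n+1}\sum_{k=0}^{\infty}\frac{1}{(k+n+1)!}\left(\frac{z\bar z}{4}\right)^{k}.$$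
   Context: The Fourier transform and its inverse are normalized as $\mathcal{F}(f)(\xi) = \frac{1}{2\pi}\int_{\mathbb{R}^2} f(x,y) e^{-i\xi_1 x - i\xi_2 y}\,dx\,dy$ and $\mathcal{F}^{-1}(\hat f)(x,y) = \frac{1}{2\pi}\int_{\mathbb{R}^2} \hat f(\xi_1,\xi_2) e^{i\xi_1 x + i\xi_2 y}\,d\xi_1\,d\xi_2$. Here $|\xi|^2 = \xi_1^2+\xi_2^2$, $\overline{\xi} = \xi_1 - i\xi_2$, and $|z|^2 = z\bar z = x^2+y^2$. The functions $\overline{\xi}^{\,n}e^{-|\xi|^2}/\xi$ are integrable on $\mathbb{R}^2$, so the inverse Fourier transforms are defined as absolutely convergent integrals. *)

theory Defs
  imports "HOL-Analysis.Analysis"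
begin

definition inv_fourier2 :: "(real \<times> real \<Rightarrow> complex) \<Rightarrow> real \<Rightarrow> real \<Rightarrow> complex" where
  "inv_fourier2 g x y =
     complex_of_real (1 / (2 * pi)) *
     integral\<^sup>L lborel (\<lambda>(\<xi>1, \<xi>2). g (\<xi>1, \<xi>2) * exp (\<i> * complex_of_real (\<xi>1 * x + \<xi>2 * y)))"

definition symb :: "nat \<Rightarrow> real \<times> real \<Rightarrow> complex" where
  "symb n = (\<lambda>(\<xi>1, \<xi>2). cnj (Complex \<xi>1 \<xi>2) ^ n / Complex \<xi>1 \<xi>2
                          * complex_of_real (exp (- (\<xi>1\<^sup>2 + \<xi>2\<^sup>2))))"

end

theory Submission
  imports Defs "HOL-Probability.Probability"
begin

lemma exp_partial_le:
  fixes x :: real assumes "0 \<le> x"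
  shows "(\<Sum>k<N. x^k / fact k) \<le> exp x"
proof -
  have "(\<Sum>k<N. x^k /\<^sub>R fact k) \<le> (\<Sum>k. x^k /\<^sub>R fact k)"
    using exp_converges[of x] assms by (intro sum_le_suminf) (auto simp: sums_iff)
  then show ?thesis using exp_converges[of x] by (simp add: sums_iff divide_inverse mult.commute)
qed

lemma exp_std_normal_shift:
  "exp (b * t) * std_normal_density t = exp (b^2/2) * normal_density b 1 t"
proof -
  have "b * t + - t\<^sup>2 / 2 = b^2/2 + - (t - b)\<^sup>2 / 2" by (simp add: power2_eq_square field_simps)
  have e: "exp (b*t) * exp (-(t\<^sup>2/2)) = exp (b\<^sup>2/2) * exp (-((t-b)\<^sup>2/2))"
    unfolding exp_add[symmetric] by (rule arg_cong[where f=exp]) (simp add: power2_eq_square field_simps)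
  show ?thesis unfolding normal_density_def using e by simp
qed

lemma integrable_exp_abs_std_normal:
  "integrable lborel (\<lambda>t. exp (b * \<bar>t\<bar>) * std_normal_density t)"
proof (rule Bochner_Integration.integrable_bound)
  show "integrable lborel (\<lambda>t. exp (b^2/2) * normal_density b 1 t + exp ((-b)^2/2) * normal_density (-b) 1 t)"
    by auto
  show "AE t in lborel. norm (exp (b * \<bar>t\<bar>) * std_normal_density t) \<le>
     norm (exp (b^2/2) * normal_density b 1 t + exp ((-b)^2/2) * normal_density (-b) 1 t)"
  proof (intro AE_I2)
    fix t
    have "exp (b * \<bar>t\<bar>) * std_normal_density t \<le> exp (b * t) * std_normal_density t + exp ((-b) * t) * std_normal_density t"
      by (cases "t \<ge> 0") (auto intro!: add_increasing add_increasing2 mult_nonneg_nonneg)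
    then show "norm (exp (b * \<bar>t\<bar>) * std_normal_density t) \<le>
     norm (exp (b^2/2) * normal_density b 1 t + exp ((-b)^2/2) * normal_density (-b) 1 t)"
      by (simp only: exp_std_normal_shift[symmetric]) (auto)
  qed
qed auto

lemma gauss_std_complex:
  fixes c :: complex
  shows "has_bochner_integral lborel (\<lambda>t. exp (c * of_real t) * of_real (std_normal_density t)) (exp (c^2/2))"
proof -
  define m :: "nat \<Rightarrow> real" where "m k = integral\<^sup>L lborel (\<lambda>x. std_normal_density x * x ^ k)" for k
  define s where "s N t = (\<Sum>k<N. (c * of_real t)^k / fact k) * of_real (std_normal_density t)" for N t
  define w where "w t = exp (norm c * \<bar>t\<bar>) * std_normal_density t" for t
  have w: "integrable lborel w" unfolding w_def by (rule integrable_exp_abs_std_normal)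
  have lim: "AE t in lborel. (\<lambda>N. s N t) \<longlonglongrightarrow> exp (c * of_real t) * of_real (std_normal_density t)"
  proof (intro AE_I2)
    fix t
    have "(\<lambda>k. (c * of_real t)^k / fact k) sums exp (c * of_real t)"
      using exp_converges[of "c * of_real t"] by (simp add: scaleR_conv_of_real divide_inverse mult.commute)
    then show "(\<lambda>N. s N t) \<longlonglongrightarrow> exp (c * of_real t) * of_real (std_normal_density t)"
      unfolding s_def sums_def by (intro tendsto_mult_right)
  qed
  have bound: "AE t in lborel. norm (s N t) \<le> w t" for N
  proof (intro AE_I2)
    fix t
    have "norm (\<Sum>k<N. (c * of_real t)^k / fact k) \<le> (\<Sum>k<N. norm ((c * of_real t)^k / fact k))"
      by (rule norm_sum)
    also have "\<dots> = (\<Sum>k<N. (norm c * \<bar>t\<bar>)^k / fact k)"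
      by (simp add: norm_mult norm_power norm_divide)
    also have "\<dots> \<le> exp (norm c * \<bar>t\<bar>)" by (rule exp_partial_le) simp
    finally show "norm (s N t) \<le> w t"
      unfolding s_def w_def by (simp add: norm_mult mult_right_mono)
  qed
  have ints: "integrable lborel (s N)" and ints': "integral\<^sup>L lborel (s N) = (\<Sum>k<N. c^k / fact k * of_real (m k))" for N
  proof -
    have eq: "s N = (\<lambda>t. \<Sum>k<N. c^k / fact k * of_real (std_normal_density t * t ^ k))"
      unfolding s_def by (intro ext, simp add: sum_distrib_right, intro sum.cong) (auto simp: power_mult_distrib field_simps)
    show "integrable lborel (s N)" unfolding eq
      by (intro Bochner_Integration.integrable_sum integrable_mult_right integrable_of_real integrable_std_normal_moment)
    show "integral\<^sup>L lborel (s N) = (\<Sum>k<N. c^k / fact k * of_real (m k))" unfolding eq m_def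
    proof (subst Bochner_Integration.integral_sum)
      show "\<And>k. k \<in> {..<N} \<Longrightarrow> integrable lborel (\<lambda>t. c^k / fact k * of_real (std_normal_density t * t ^ k))"
        by (intro integrable_mult_right integrable_of_real integrable_std_normal_moment)
      show "(\<Sum>k<N. integral\<^sup>L lborel (\<lambda>t. c^k / fact k * of_real (std_normal_density t * t ^ k))) =
            (\<Sum>k<N. c^k / fact k * of_real (integral\<^sup>L lborel (\<lambda>x. std_normal_density x * x ^ k)))"
        by (rule sum.cong[OF refl], subst integral_mult_right_zero, subst integral_complex_of_real) (rule refl)
    qed
  qed
  have meas: "(\<lambda>t. exp (c * of_real t) * of_real (std_normal_density t)) \<in> borel_measurable lborel"
    by measurable
  have I: "integrable lborel (\<lambda>t. exp (c * of_real t) * of_real (std_normal_density t))"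
    by (rule integrable_dominated_convergence[OF meas _ w lim bound]) (use ints in auto)
  have L: "(\<lambda>N. \<Sum>k<N. c^k / fact k * of_real (m k)) \<longlonglongrightarrow> integral\<^sup>L lborel (\<lambda>t. exp (c * of_real t) * of_real (std_normal_density t))"
    using integral_dominated_convergence[OF meas _ w lim bound] ints ints' by auto
  have S: "(\<lambda>k. c^k / fact k * of_real (m k)) sums exp (c^2/2)"
  proof -
    have odd0: "c^k / fact k * of_real (m k) = 0" if "k \<notin> range (\<lambda>j. 2*j)" for k
    proof -
      from that have "odd k" by (auto elim!: evenE)
      then obtain j where "k = 2*j+1" by (auto elim!: oddE)
      then have "m k = 0" unfolding m_def by (simp only: integral_std_normal_moment_odd)
      then show ?thesis by simp
    qed
    have "(\<lambda>j. (c^2/2)^j /\<^sub>R fact j) sums exp (c^2/2)" by (rule exp_converges)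
    moreover have "(\<lambda>j. (c^2/2)^j /\<^sub>R fact j) = (\<lambda>k. c^k / fact k * of_real (m k)) \<circ> (\<lambda>j. 2*j)"
    proof (rule ext)
      fix j
      have "m (2*j) = fact (2 * j) / (2^j * fact j)" unfolding m_def by (rule integral_std_normal_moment_even)
      then have mm: "complex_of_real (m (2*j)) = fact (2 * j) / (2^j * fact j)" by simp
      show "(c^2/2)^j /\<^sub>R fact j = ((\<lambda>k. c^k / fact k * of_real (m k)) \<circ> (\<lambda>j. 2*j)) j"
        unfolding o_def mm by (simp add: scaleR_conv_of_real power_mult power_divide field_simps flip: power_mult_distrib) (simp add: power_mult[symmetric] mult.commute)
    qed
    ultimately have "(\<lambda>j. (\<lambda>k. c^k / fact k * of_real (m k)) (2*j)) sums exp (c^2/2)"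
      by (simp add: o_def)
    moreover have "strict_mono (\<lambda>j::nat. 2*j)" by (auto simp: strict_mono_def)
    ultimately show ?thesis
      using sums_mono_reindex[of "\<lambda>j. 2*j" "\<lambda>k. c^k / fact k * of_real (m k)", OF _ odd0] by blast
  qed
  from S have "(\<lambda>N. \<Sum>k<N. c^k / fact k * of_real (m k)) \<longlonglongrightarrow> exp (c^2/2)" by (simp add: sums_def)
  with L have "integral\<^sup>L lborel (\<lambda>t. exp (c * of_real t) * of_real (std_normal_density t)) = exp (c^2/2)"
    using LIMSEQ_unique by blast
  with I show ?thesis by (simp add: has_bochner_integral_iff)
qed

lemma powser_coeffs_zero:
  fixes a :: "nat \<Rightarrow> complex"
  assumes S: "\<And>w. (\<lambda>k. a k * w^k) sums 0"
  shows "a k = 0"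
proof (induction k rule: less_induct)
  case (less k)
  define g where "g w = (\<Sum>n. a (n+k) * w^n)" for w
  have summ: "summable (\<lambda>n. a (n+k) * w^n)" for w
  proof (cases "w = 0")
    case True then show ?thesis by (simp add: summable_0_powser)
  next
    case False
    have "summable (\<lambda>n. a (n+k) * w^(n+k))"
      using summable_ignore_initial_segment[OF sums_summable[OF S[of w]], of k] by simp
    then have "summable (\<lambda>n. (a (n+k) * w^(n+k)) / w^k)" by (rule summable_divide)
    then show ?thesis using False by (simp add: power_add)
  qed
  have g0: "g w = 0" if "w \<noteq> 0" for w
  proof -
    have "(\<lambda>n. a (n+k) * w^(n+k)) sums (0 - (\<Sum>i<k. a i * w^i))" by (rule sums_split_initial_segment[OF S])
    moreover have "(\<Sum>i<k. a i * w^i) = 0" using less by simp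
    ultimately have "(\<lambda>n. a (n+k) * w^(n+k)) sums 0" by simp
    then have "(\<lambda>n. a (n+k) * w^(n+k) / w^k) sums (0 / w^k)" by (rule sums_divide)
    then have "(\<lambda>n. a (n+k) * w^n) sums 0" using that by (simp add: power_add)
    then show ?thesis unfolding g_def by (simp add: sums_iff)
  qed
  have "isCont g 0" unfolding g_def by (rule isCont_powser_converges_everywhere) (rule summ)
  then have 1: "(g \<longlongrightarrow> g 0) (at 0)" by (simp add: isCont_def)
  have ev: "eventually (\<lambda>w. g w = 0) (at 0)"
    unfolding eventually_at_filter by (intro always_eventually) (auto simp: g0)
  have 2: "(g \<longlongrightarrow> 0) (at 0)" by (rule tendsto_eventually[OF ev])
  have "g 0 = 0" using tendsto_unique[OF at_neq_bot 1 2] .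
  moreover have "g 0 = a k" unfolding g_def using powser_zero[of "\<lambda>n. a (n+k)"] by simp
  ultimately show ?case by simp
qed

lemma gauss_complex:
  fixes c :: complex and s :: real assumes s: "0 < s"
  shows "has_bochner_integral lborel (\<lambda>t. exp (c * of_real t - of_real (s * t^2)))
           (of_real (sqrt (pi / s)) * exp (c^2 / of_real (4* s)))"
proof -
  define r where "r = sqrt (2* s)"
  have r: "0 < r" "r^2 = 2* s" using s by (auto simp: r_def)
  define c' where "c' = c / of_real r"
  define f where "f t = exp (c' * of_real t) * of_real (std_normal_density t)" for t
  have "has_bochner_integral lborel (\<lambda>u. f (0 + r*u)) (exp (c'^2/2) /\<^sub>R \<bar>r\<bar>)"
    using iffD1[OF lborel_has_bochner_integral_real_affine_iff[of r f "exp (c'^2/2)" 0]] gauss_std_complex[of c'] r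
    unfolding f_def by simp
  then have H: "has_bochner_integral lborel (\<lambda>u. of_real (sqrt (2*pi)) * f (0 + r*u))
        (of_real (sqrt (2*pi)) * (exp (c'^2/2) /\<^sub>R \<bar>r\<bar>))"
    by (rule has_bochner_integral_mult_right)
  show ?thesis
  proof (rule has_bochner_integral_cong[THEN iffD1, OF refl _ _ H])
    fix u :: real
    have A: "c' * of_real (0 + r*u) = c * of_real u" using r by (simp add: c'_def)
    have B: "uminus ((0 + r*u)^2) / 2 = uminus (s*u^2)" using r by (simp add: power_mult_distrib)
    have 3: "exp (c * of_real u - of_real (s * u^2)) = exp (c * of_real u) * of_real (exp (-(s*u^2)))"
    proof -
      have "exp (c * of_real u - of_real (s * u^2)) = exp (c * of_real u + of_real (-(s*u^2)))" by simp
      also have "\<dots> = exp (c * of_real u) * exp (of_real (-(s*u^2)))" by (rule exp_add)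
      also have "\<dots> = exp (c * of_real u) * of_real (exp (-(s*u^2)))" by (simp only: exp_of_real)
      finally show ?thesis .
    qed
    have K: "complex_of_real (sqrt (2*pi)) * of_real (1 / sqrt (2*pi) * e) = of_real e" for e
    proof -
      have "sqrt (2*pi) * (1 / sqrt (2*pi) * e) = e" by simp
      then show ?thesis by (metis of_real_mult)
    qed
    show "of_real (sqrt (2*pi)) * f (0 + r*u) = exp (c * of_real u - of_real (s * u^2))"
      unfolding f_def std_normal_density_def A B 3 by (metis K mult.left_commute)
  next
    have rr: "(complex_of_real r)^2 = 2 * of_real s"
    proof -
      have "(complex_of_real r)^2 = of_real (r^2)" by simp
      also have "\<dots> = of_real (2 * s)" by (simp only: r(2))
      finally show ?thesis by simp
    qed
    have 1: "c'^2/2 = c^2 / of_real (4* s)" using s by (simp add: c'_def power_divide rr field_simps)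
    have 2: "sqrt (2*pi) / r = sqrt (pi / s)" using s by (simp add: r_def real_sqrt_divide[symmetric])
    show "of_real (sqrt (2*pi)) * (exp (c'^2/2) /\<^sub>R \<bar>r\<bar>) = of_real (sqrt (pi / s)) * exp (c^2 / of_real (4* s))"
    proof -
      have t2a: "sqrt (2*pi) = r * sqrt (pi/s)" using 2 r by (simp add: field_simps)
      have t2b: "complex_of_real (sqrt (2*pi)) = of_real r * of_real (sqrt (pi/s))" by (simp add: t2a)
      show ?thesis unfolding t2b 1 using r by (simp add: scaleR_conv_of_real field_simps)
    qed
  qed
qed

lemma has_bochner_integral_lborel_prod:
  fixes f g :: "real \<Rightarrow> complex"
  assumes f: "has_bochner_integral lborel f I" and g: "has_bochner_integral lborel g J"
  shows "has_bochner_integral lborel (\<lambda>p::real\<times>real. f (fst p) * g (snd p)) (I * J)"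
proof -
  have fi: "integrable lborel f" and gi: "integrable lborel g" and If: "integral\<^sup>L lborel f = I"
    and Jg: "integral\<^sup>L lborel g = J" using f g by (auto simp: has_bochner_integral_iff)
  have [measurable]: "f \<in> borel_measurable borel" "g \<in> borel_measurable borel"
    using borel_measurable_integrable[OF fi] borel_measurable_integrable[OF gi] by simp_all
  have int: "integrable (lborel \<Otimes>\<^sub>M lborel) (\<lambda>p. f (fst p) * g (snd p))"
  proof (rule lborel_pair.Fubini_integrable)
    show "(\<lambda>p. f (fst p) * g (snd p)) \<in> borel_measurable (lborel \<Otimes>\<^sub>M lborel)" by measurable
    have eq: "(\<lambda>x. \<integral>y. norm (f (fst (x,y)) * g (snd (x,y))) \<partial>lborel) = (\<lambda>x. norm (f x) * (\<integral>y. norm (g y) \<partial>lborel))"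
      by (simp add: norm_mult)
    show "integrable lborel (\<lambda>x. \<integral>y. norm (f (fst (x,y)) * g (snd (x,y))) \<partial>lborel)"
      unfolding eq by (intro integrable_mult_left integrable_norm fi)
    show "AE x in lborel. integrable lborel (\<lambda>y. f (fst (x,y)) * g (snd (x,y)))" using gi by simp
  qed
  have "integral\<^sup>L (lborel \<Otimes>\<^sub>M lborel) (\<lambda>p. f (fst p) * g (snd p)) = (\<integral>x. \<integral>y. f x * g y \<partial>lborel \<partial>lborel)"
    using lborel_pair.integral_fst'[OF int] by simp
  also have "\<dots> = I * J" by (simp add: If Jg)
  finally show ?thesis using int by (simp add: has_bochner_integral_iff lborel_prod)
qed

lemma gauss2d:
  fixes w :: complex and s x y :: real assumes s: "0 < s"
  shows "has_bochner_integral lborel (\<lambda>p::real\<times>real. exp (w * cnj (Complex (fst p) (snd p))) *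
             exp (\<i> * of_real (fst p * x + snd p * y) - of_real (s * ((fst p)^2 + (snd p)^2))))
         (of_real (pi/s) * exp (- of_real ((x^2+y^2)/(4* s))) * exp (w * (\<i> * cnj (Complex x y) / of_real (2* s))))"
proof -
  define c1 where "c1 = w + \<i> * of_real x"
  define c2 where "c2 = - \<i> * w + \<i> * of_real y"
  have H: "has_bochner_integral lborel (\<lambda>p::real\<times>real. exp (c1 * of_real (fst p) - of_real (s * (fst p)^2)) *
        exp (c2 * of_real (snd p) - of_real (s * (snd p)^2)))
      ((of_real (sqrt (pi / s)) * exp (c1^2 / of_real (4* s))) * (of_real (sqrt (pi / s)) * exp (c2^2 / of_real (4* s))))"
    by (rule has_bochner_integral_lborel_prod[OF gauss_complex[OF s] gauss_complex[OF s]])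
  show ?thesis
  proof (rule has_bochner_integral_cong[THEN iffD1, OF refl _ _ H])
    fix p :: "real \<times> real"
    obtain a b where p: "p = (a,b)" by fastforce
    show "exp (c1 * of_real (fst p) - of_real (s * (fst p)^2)) * exp (c2 * of_real (snd p) - of_real (s * (snd p)^2)) =
      exp (w * cnj (Complex (fst p) (snd p))) *
             exp (\<i> * of_real (fst p * x + snd p * y) - of_real (s * ((fst p)^2 + (snd p)^2)))"
      unfolding p fst_conv snd_conv mult_exp_exp c1_def c2_def
      by (rule arg_cong[where f=exp]) (simp add: Complex_eq algebra_simps)
  next
    have sq: "of_real (sqrt (pi / s)) * of_real (sqrt (pi / s)) = (of_real (pi/s) :: complex)"
      using s by (simp flip: of_real_mult)
    have e: "c1^2 / of_real (4* s) + c2^2 / of_real (4* s) = - of_real ((x^2+y^2)/(4* s)) + w * (\<i> * cnj (Complex x y) / of_real (2* s))"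
    proof -
      have e0: "c1^2 + c2^2 = 2 * \<i> * w * cnj (Complex x y) - of_real (x^2+y^2)"
        unfolding c1_def c2_def by (simp add: complex_eq_iff power2_eq_square algebra_simps)
      have "c1^2 / of_real (4* s) + c2^2 / of_real (4* s) = (c1^2 + c2^2) / of_real (4* s)"
        by (simp add: add_divide_distrib)
      also have "\<dots> = (2 * \<i> * w * cnj (Complex x y) - of_real (x^2+y^2)) / of_real (4* s)" by (simp only: e0)
      also have "\<dots> = - of_real ((x^2+y^2)/(4* s)) + w * (\<i> * cnj (Complex x y) / of_real (2* s))"
        using s by (simp add: field_simps)
      finally show ?thesis .
    qed
    show "(of_real (sqrt (pi / s)) * exp (c1^2 / of_real (4* s))) * (of_real (sqrt (pi / s)) * exp (c2^2 / of_real (4* s))) =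
       of_real (pi/s) * exp (- of_real ((x^2+y^2)/(4* s))) * exp (w * (\<i> * cnj (Complex x y) / of_real (2* s)))"
    proof -
      have ee: "exp (c1^2 / of_real (4* s)) * exp (c2^2 / of_real (4* s)) =
          exp (- of_real ((x^2+y^2)/(4* s))) * exp (w * (\<i> * cnj (Complex x y) / of_real (2* s)))"
        by (simp only: mult_exp_exp e)
      have "(of_real (sqrt (pi / s)) * exp (c1^2 / of_real (4* s))) * (of_real (sqrt (pi / s)) * exp (c2^2 / of_real (4* s)))
          = (of_real (sqrt (pi / s)) * of_real (sqrt (pi / s))) * (exp (c1^2 / of_real (4* s)) * exp (c2^2 / of_real (4* s)))"
        by (simp only: mult_ac)
      also have "\<dots> = of_real (pi/s) * (exp (- of_real ((x^2+y^2)/(4* s))) * exp (w * (\<i> * cnj (Complex x y) / of_real (2* s))))"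
        by (simp only: sq ee)
      finally show ?thesis by (simp only: mult.assoc)
    qed
  qed
qed

lemma borel_measurable_Complex[measurable]:
  "f \<in> borel_measurable M \<Longrightarrow> g \<in> borel_measurable M \<Longrightarrow> (\<lambda>x. Complex (f x) (g x)) \<in> borel_measurable M"
proof -
  assume [measurable]: "f \<in> borel_measurable M" "g \<in> borel_measurable M"
  have "(\<lambda>x. Complex (f x) (g x)) = (\<lambda>x. f x *\<^sub>R 1 + g x *\<^sub>R \<i>)" by (auto simp: complex_eq_iff)
  then show ?thesis by simp
qed

lemma norm_gauss_integrand:
  "norm (exp (w * cnj (Complex a b)) * exp (\<i> * of_real (a * x + b * y) - of_real (s * (a^2 + b^2))))
    = exp (Re w * a + Im w * b) * exp (- (s * (a^2 + b^2)))"
  by (simp add: norm_mult norm_exp_eq_Re)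

lemma dom_integrable:
  assumes s: "0 < s" and r: "0 \<le> r"
  shows "integrable lborel (\<lambda>p::real\<times>real. exp (r * (\<bar>fst p\<bar> + \<bar>snd p\<bar>)) * exp (- (s * ((fst p)^2 + (snd p)^2))))"
proof -
  define G where "G w p = exp (w * cnj (Complex (fst p) (snd p))) *
             exp (\<i> * of_real (fst p * 0 + snd p * 0) - of_real (s * ((fst p)^2 + (snd p)^2)))" for w p
  have iG: "integrable lborel (G w)" for w
    unfolding G_def using gauss2d[OF s, of w 0 0] by (simp add: has_bochner_integral_iff)
  have nG: "norm (G w p) = exp (Re w * fst p + Im w * snd p) * exp (- (s * ((fst p)^2 + (snd p)^2)))" for w p
    unfolding G_def by (rule norm_gauss_integrand)
  show ?thesis
  proof (rule Bochner_Integration.integrable_bound)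
    show "integrable lborel (\<lambda>p. norm (G (Complex r r) p) + norm (G (Complex r (-r)) p) + norm (G (Complex (-r) r) p) + norm (G (Complex (-r) (-r)) p))"
      by (intro Bochner_Integration.integrable_add integrable_norm iG)
    show "AE p in lborel. norm (exp (r * (\<bar>fst p\<bar> + \<bar>snd p\<bar>)) * exp (- (s * ((fst p)^2 + (snd p)^2))))
      \<le> norm (norm (G (Complex r r) p) + norm (G (Complex r (-r)) p) + norm (G (Complex (-r) r) p) + norm (G (Complex (-r) (-r)) p))"
    proof (intro AE_I2)
      fix p :: "real \<times> real"
      obtain a b where p: "p = (a,b)" by fastforce
      define e where "e = exp (- (s * (a^2 + b^2)))"
      have e0: "0 < e" unfolding e_def by simp
      have "exp (r * (\<bar>a\<bar> + \<bar>b\<bar>)) \<le> exp (r*a + r*b) + exp (r*a + -r*b) + exp (-r*a + r*b) + exp (-r*a + -r*b)"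
      proof -
        have "exp (r * (\<bar>a\<bar> + \<bar>b\<bar>)) \<in> {exp (r*a + r*b), exp (r*a + -r*b), exp (-r*a + r*b), exp (-r*a + -r*b)}"
          by (cases "a \<ge> 0"; cases "b \<ge> 0") (auto simp: algebra_simps)
        moreover have "0 < exp (r*a + r*b)" "0 < exp (r*a + -r*b)" "0 < exp (-r*a + r*b)" "0 < exp (-r*a + -r*b)" by auto
        ultimately show ?thesis by auto
      qed
      then have le: "exp (r * (\<bar>a\<bar> + \<bar>b\<bar>)) * e \<le> (exp (r*a + r*b) + exp (r*a + -r*b) + exp (-r*a + r*b) + exp (-r*a + -r*b)) * e"
        using e0 by (intro mult_right_mono) auto
      have n1: "norm (G (Complex r r) p) = exp (r*a + r*b) * e" unfolding nG p e_def by simp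
      have n2: "norm (G (Complex r (-r)) p) = exp (r*a + -r*b) * e" unfolding nG p e_def by simp
      have n3: "norm (G (Complex (-r) r) p) = exp (-r*a + r*b) * e" unfolding nG p e_def by simp
      have n4: "norm (G (Complex (-r) (-r)) p) = exp (-r*a + -r*b) * e" unfolding nG p e_def by simp
      have lhs: "norm (exp (r * (\<bar>fst p\<bar> + \<bar>snd p\<bar>)) * exp (- (s * ((fst p)^2 + (snd p)^2)))) = exp (r * (\<bar>a\<bar> + \<bar>b\<bar>)) * e"
        unfolding p e_def by simp
      have "0 \<le> norm (G (Complex r r) p) + norm (G (Complex r (-r)) p) + norm (G (Complex (-r) r) p) + norm (G (Complex (-r) (-r)) p)"
        by simp
      then have rhs: "norm (norm (G (Complex r r) p) + norm (G (Complex r (-r)) p) + norm (G (Complex (-r) r) p) + norm (G (Complex (-r) (-r)) p))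
         = (exp (r*a + r*b) + exp (r*a + -r*b) + exp (-r*a + r*b) + exp (-r*a + -r*b)) * e"
        unfolding n1 n2 n3 n4 by (simp add: algebra_simps)
      show "norm (exp (r * (\<bar>fst p\<bar> + \<bar>snd p\<bar>)) * exp (- (s * ((fst p)^2 + (snd p)^2))))
        \<le> norm (norm (G (Complex r r) p) + norm (G (Complex r (-r)) p) + norm (G (Complex (-r) r) p) + norm (G (Complex (-r) (-r)) p))"
        unfolding lhs rhs by (rule le)
    qed
  qed (simp only: measurable_lborel2, intro borel_measurable_continuous_onI continuous_intros)
qed

lemma pow_le_fact_exp:
  fixes t :: real assumes "0 \<le> t"
  shows "t^m \<le> fact m * exp t"
proof -
  have "t^m / fact m \<le> (\<Sum>k<Suc m. t^k / fact k)"
    using assms by (intro member_le_sum) auto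
  also have "\<dots> \<le> exp t" by (rule exp_partial_le[OF assms])
  finally show ?thesis by (simp add: field_simps)
qed

lemma cmod_Complex_le: "cmod (Complex a b) \<le> \<bar>a\<bar> + \<bar>b\<bar>"
  using cmod_le[of "Complex a b"] by simp


lemma gauss2d_poly:
  fixes x y s :: real assumes s: "0 < s"
  shows "has_bochner_integral lborel (\<lambda>p::real\<times>real. cnj (Complex (fst p) (snd p))^m *
            exp (\<i> * of_real (fst p * x + snd p * y) - of_real (s * ((fst p)^2 + (snd p)^2))))
         (of_real (pi/s) * exp (- of_real ((x^2+y^2)/(4 * s))) * (\<i> * cnj (Complex x y) / of_real (2 * s))^m)"
proof -
  define X where "X p = cnj (Complex (fst p) (snd p))" for p :: "real\<times>real"
  define E where "E p = exp (\<i> * of_real (fst p * x + snd p * y) - of_real (s * ((fst p)^2 + (snd p)^2)))" for p :: "real\<times>real"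
  define C :: complex where "C = of_real (pi/s) * exp (- of_real ((x^2+y^2)/(4 * s)))"
  define \<beta> where "\<beta> = \<i> * cnj (Complex x y) / of_real (2 * s)"
  define D where "D r p = exp (r * (\<bar>fst p\<bar> + \<bar>snd p\<bar>)) * exp (- (s * ((fst p)^2 + (snd p)^2)))" for r p
  have iD: "integrable lborel (D r)" if "0 \<le> r" for r
    using dom_integrable[OF s that] unfolding D_def by simp
  have Xeq: "X = (\<lambda>p. of_real (fst p) - \<i> * of_real (snd p))" unfolding X_def by (auto simp: complex_eq_iff)
  have mX[measurable]: "X \<in> borel_measurable lborel"
    unfolding Xeq by (simp only: measurable_lborel2, intro borel_measurable_continuous_onI continuous_intros)
  have mE[measurable]: "E \<in> borel_measurable lborel"
    unfolding E_def by (simp only: measurable_lborel2, intro borel_measurable_continuous_onI continuous_intros)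
  have nX: "norm (X p) \<le> \<bar>fst p\<bar> + \<bar>snd p\<bar>" for p
    unfolding X_def using cmod_Complex_le[of "fst p" "snd p"] by simp
  have nE: "norm (E p) = exp (- (s * ((fst p)^2 + (snd p)^2)))" for p
    unfolding E_def by (simp add: norm_exp_eq_Re)
  define P where "P k = integral\<^sup>L lborel (\<lambda>p. X p ^ k * E p)" for k
  have iP: "integrable lborel (\<lambda>p. X p ^ k * E p)" for k
  proof (rule Bochner_Integration.integrable_bound)
    show "integrable lborel (\<lambda>p. fact k * D 1 p)" using iD[of 1] by simp
    show "(\<lambda>p. X p ^ k * E p) \<in> borel_measurable lborel" by measurable
    show "AE p in lborel. norm (X p ^ k * E p) \<le> norm (fact k * D 1 p)"
    proof (intro AE_I2)
      fix p
      have "norm (X p ^ k * E p) = norm (X p) ^ k * exp (- (s * ((fst p)^2 + (snd p)^2)))"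
        by (simp add: norm_mult norm_power nE)
      also have "\<dots> \<le> (\<bar>fst p\<bar> + \<bar>snd p\<bar>) ^ k * exp (- (s * ((fst p)^2 + (snd p)^2)))"
        by (intro mult_right_mono power_mono nX) auto
      also have "\<dots> \<le> (fact k * exp (\<bar>fst p\<bar> + \<bar>snd p\<bar>)) * exp (- (s * ((fst p)^2 + (snd p)^2)))"
        by (intro mult_right_mono pow_le_fact_exp) auto
      also have "\<dots> = norm (fact k * D 1 p)" by (simp add: D_def)
      finally show "norm (X p ^ k * E p) \<le> norm (fact k * D 1 p)" .
    qed
  qed
  have S: "(\<lambda>k. w^k / fact k * P k) sums (C * exp (w * \<beta>))" for w
  proof -
    define sN where "sN N p = (\<Sum>k<N. (w * X p)^k / fact k) * E p" for N p
    have G: "has_bochner_integral lborel (\<lambda>p. exp (w * X p) * E p) (C * exp (w * \<beta>))"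
      using gauss2d[OF s, of w x y] unfolding X_def E_def C_def \<beta>_def by simp
    have meas: "(\<lambda>p. exp (w * X p) * E p) \<in> borel_measurable lborel" by measurable
    have lim: "AE p in lborel. (\<lambda>N. sN N p) \<longlonglongrightarrow> exp (w * X p) * E p"
    proof (intro AE_I2)
      fix p
      have "(\<lambda>k. (w * X p)^k / fact k) sums exp (w * X p)"
        using exp_converges[of "w * X p"] by (simp add: scaleR_conv_of_real divide_inverse mult.commute)
      then show "(\<lambda>N. sN N p) \<longlonglongrightarrow> exp (w * X p) * E p"
        unfolding sN_def sums_def by (intro tendsto_mult_right)
    qed
    have bound: "AE p in lborel. norm (sN N p) \<le> D (norm w) p" for N
    proof (intro AE_I2)
      fix p
      have "norm (\<Sum>k<N. (w * X p)^k / fact k) \<le> (\<Sum>k<N. norm ((w * X p)^k / fact k))"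
        by (rule norm_sum)
      also have "\<dots> = (\<Sum>k<N. (norm w * norm (X p))^k / fact k)"
        by (simp add: norm_mult norm_power norm_divide)
      also have "\<dots> \<le> exp (norm w * norm (X p))" by (rule exp_partial_le) simp
      also have "\<dots> \<le> exp (norm w * (\<bar>fst p\<bar> + \<bar>snd p\<bar>))"
        by (intro exp_mono mult_left_mono nX) auto
      finally have "norm (\<Sum>k<N. (w * X p)^k / fact k) \<le> exp (norm w * (\<bar>fst p\<bar> + \<bar>snd p\<bar>))" .
      then show "norm (sN N p) \<le> D (norm w) p"
        unfolding sN_def D_def norm_mult nE by (intro mult_right_mono) auto
    qed
    have ints: "integrable lborel (sN N)" and ints': "integral\<^sup>L lborel (sN N) = (\<Sum>k<N. w^k / fact k * P k)" for N
    proof -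
      have eq: "sN N = (\<lambda>p. \<Sum>k<N. w^k / fact k * (X p ^ k * E p))"
        unfolding sN_def by (intro ext, simp add: sum_distrib_right, intro sum.cong) (auto simp: power_mult_distrib field_simps)
      show "integrable lborel (sN N)" unfolding eq
        by (intro Bochner_Integration.integrable_sum integrable_mult_right iP)
      show "integral\<^sup>L lborel (sN N) = (\<Sum>k<N. w^k / fact k * P k)" unfolding eq P_def
      proof (subst Bochner_Integration.integral_sum)
        show "\<And>k. k \<in> {..<N} \<Longrightarrow> integrable lborel (\<lambda>p. w^k / fact k * (X p ^ k * E p))"
          by (intro integrable_mult_right iP)
        show "(\<Sum>k<N. integral\<^sup>L lborel (\<lambda>p. w^k / fact k * (X p ^ k * E p))) =
            (\<Sum>k<N. w^k / fact k * integral\<^sup>L lborel (\<lambda>p. X p ^ k * E p))"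
          by (rule sum.cong[OF refl], subst integral_mult_right_zero) (rule refl)
      qed
    qed
    have L: "(\<lambda>N. \<Sum>k<N. w^k / fact k * P k) \<longlonglongrightarrow> integral\<^sup>L lborel (\<lambda>p. exp (w * X p) * E p)"
      using integral_dominated_convergence[OF meas _ iD[of "norm w"] lim bound] ints ints' by auto
    moreover have "integral\<^sup>L lborel (\<lambda>p. exp (w * X p) * E p) = C * exp (w * \<beta>)"
      using G by (simp add: has_bochner_integral_iff)
    ultimately show ?thesis by (simp add: sums_def)
  qed
  have S2: "(\<lambda>k. w^k / fact k * (C * \<beta>^k)) sums (C * exp (w * \<beta>))" for w
  proof -
    have "(\<lambda>k. C * ((w * \<beta>)^k /\<^sub>R fact k)) sums (C * exp (w * \<beta>))"
      by (intro sums_mult exp_converges)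
    then show ?thesis by (simp add: scaleR_conv_of_real power_mult_distrib field_simps)
  qed
  have coeff: "(P k - C * \<beta>^k) / fact k = 0" for k
  proof (rule powser_coeffs_zero)
    fix w :: complex
    have "(\<lambda>k. w^k / fact k * P k - w^k / fact k * (C * \<beta>^k)) sums (C * exp (w * \<beta>) - C * exp (w * \<beta>))"
      by (intro sums_diff S S2)
    then show "(\<lambda>k. (P k - C * \<beta>^k) / fact k * w^k) sums 0"
      by (simp add: field_simps)
  qed
  have "P m = C * \<beta>^m" using coeff[of m] by simp
  then show ?thesis using iP[of m] unfolding P_def X_def E_def C_def \<beta>_def
    by (simp add: has_bochner_integral_iff)
qed

lemma integrable_lborel_prod_real:
  fixes f g :: "real \<Rightarrow> real"
  assumes f: "integrable lborel f" and g: "integrable lborel g"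
  shows "integrable lborel (\<lambda>p::real\<times>real. f (fst p) * g (snd p))"
proof -
  have "has_bochner_integral lborel (\<lambda>p::real\<times>real. complex_of_real (f (fst p)) * complex_of_real (g (snd p)))
     (integral\<^sup>L lborel (\<lambda>t. complex_of_real (f t)) * integral\<^sup>L lborel (\<lambda>t. complex_of_real (g t)))"
    by (intro has_bochner_integral_lborel_prod has_bochner_integral_integrable integrable_of_real f g)
  then have "integrable lborel (\<lambda>p::real\<times>real. complex_of_real (f (fst p) * g (snd p)))"
    by (simp add: has_bochner_integral_iff)
  from integrable_Re[OF this] show ?thesis by simp
qed

lemma integrable_exp_minus_square: "integrable lborel (\<lambda>t::real. exp (- t\<^sup>2))"
proof -
  have "integrable lborel (\<lambda>t. exp (0 * complex_of_real t - complex_of_real (1 * t\<^sup>2)))"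
    using gauss_complex[of 1 0] by (simp add: has_bochner_integral_iff)
  from integrable_norm[OF this] show ?thesis by (simp add: norm_exp_eq_Re)
qed

lemma integrable_inv_sqrt_01: "integrable lborel (\<lambda>t::real. indicator {0..1} t * inverse (sqrt t))"
proof -
  have "(\<lambda>t::real. t powr (-1/2)) integrable_on {0..1}" by (rule integrable_on_powr_from_0) auto
  then have "(\<lambda>t::real. t powr (-1/2)) absolutely_integrable_on {0..1}"
    by (rule nonnegative_absolutely_integrable_1) auto
  then have "integrable lebesgue (\<lambda>t::real. indicator {0..1} t *\<^sub>R t powr (-1/2))"
    by (simp add: set_integrable_def)
  moreover have "(\<lambda>t::real. indicator {0..1} t *\<^sub>R t powr (-1/2)) = (\<lambda>t. indicator {0..1} t * inverse (sqrt t))"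
  proof
    fix t :: real
    show "indicator {0..1} t *\<^sub>R t powr (-1/2) = indicator {0..1} t * inverse (sqrt t)"
    proof (cases "0 \<le> t")
      case True
      then have "t powr (-1/2) = inverse (sqrt t)"
        by (cases "t = 0") (simp_all add: powr_minus powr_half_sqrt)
      then show ?thesis by simp
    qed (simp add: indicator_def)
  qed
  ultimately have "integrable lebesgue (\<lambda>t::real. indicator {0..1} t * inverse (sqrt t))" by simp
  then show ?thesis by (subst (asm) integrable_completion) measurable
qed

lemma integrable_g1: "integrable lborel (\<lambda>t::real. inverse (sqrt \<bar>t\<bar>) * exp (- t\<^sup>2))"
proof (rule Bochner_Integration.integrable_bound)
  let ?k = "\<lambda>t::real. indicator {0..1} t * inverse (sqrt t)"
  have k2: "integrable lborel (\<lambda>t::real. ?k (0 + (-1) * t))"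
    by (rule lborel_integrable_real_affine[OF integrable_inv_sqrt_01]) simp
  show "integrable lborel (\<lambda>t::real. ?k t + ?k (0 + (-1) * t) + exp (- t\<^sup>2))"
    by (intro Bochner_Integration.integrable_add integrable_inv_sqrt_01 k2 integrable_exp_minus_square)
  show "AE t in lborel. norm (inverse (sqrt \<bar>t\<bar>) * exp (- t\<^sup>2)) \<le> norm (?k t + ?k (0 + (-1) * t) + exp (- t\<^sup>2))"
  proof (intro AE_I2)
    fix t :: real
    have e: "0 < exp (- t\<^sup>2)" "exp (- t\<^sup>2) \<le> 1" by auto
    have i0: "0 \<le> inverse (sqrt \<bar>t\<bar>)" by simp
    have k0: "0 \<le> ?k t" "0 \<le> ?k (0 + (-1) * t)" by (auto simp: indicator_def)
    have "inverse (sqrt \<bar>t\<bar>) * exp (- t\<^sup>2) \<le> ?k t + ?k (0 + (-1) * t) + exp (- t\<^sup>2)"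
    proof (cases "\<bar>t\<bar> \<le> 1")
      case True
      have "inverse (sqrt \<bar>t\<bar>) * exp (- t\<^sup>2) \<le> inverse (sqrt \<bar>t\<bar>)"
        using e i0 by (simp add: mult_left_le)
      also have "inverse (sqrt \<bar>t\<bar>) \<le> ?k t + ?k (0 + (-1) * t)"
        using True by (cases "0 \<le> t") (auto simp: indicator_def)
      finally have "inverse (sqrt \<bar>t\<bar>) * exp (- t\<^sup>2) \<le> ?k t + ?k (0 + (-1) * t)" .
      then show ?thesis using e(1) by linarith
    next
      case False
      then have "sqrt \<bar>t\<bar> \<ge> 1" by simp
      then have "inverse (sqrt \<bar>t\<bar>) \<le> 1" by (simp add: inverse_le_1_iff)
      then have "inverse (sqrt \<bar>t\<bar>) * exp (- t\<^sup>2) \<le> 1 * exp (- t\<^sup>2)"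
        using e by (intro mult_right_mono) auto
      then show ?thesis using k0 by linarith
    qed
    then show "norm (inverse (sqrt \<bar>t\<bar>) * exp (- t\<^sup>2)) \<le> norm (?k t + ?k (0 + (-1) * t) + exp (- t\<^sup>2))"
      using k0 i0 e by simp
  qed
qed measurable

lemma integrable_Q: "integrable lborel (\<lambda>p::real\<times>real. exp (- ((fst p)\<^sup>2 + (snd p)\<^sup>2)) / sqrt ((fst p)\<^sup>2 + (snd p)\<^sup>2))"
proof (rule Bochner_Integration.integrable_bound)
  let ?g = "\<lambda>t::real. inverse (sqrt \<bar>t\<bar>) * exp (- t\<^sup>2)"
  show "integrable lborel (\<lambda>p::real\<times>real. ?g (fst p) * ?g (snd p))"
    by (intro integrable_lborel_prod_real integrable_g1)
  show "(\<lambda>p::real\<times>real. exp (- ((fst p)\<^sup>2 + (snd p)\<^sup>2)) / sqrt ((fst p)\<^sup>2 + (snd p)\<^sup>2)) \<in> borel_measurable lborel"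
    by (simp only: measurable_lborel2, intro borel_measurable_divide borel_measurable_continuous_onI continuous_intros)
  have ae: "AE p in (lborel \<Otimes>\<^sub>M lborel). fst p \<noteq> (0::real) \<and> snd p \<noteq> (0::real)"
  proof (rule lborel_pair.AE_pair_measure)
    show "{p \<in> space (lborel \<Otimes>\<^sub>M lborel). fst p \<noteq> (0::real) \<and> snd p \<noteq> (0::real)} \<in> sets (lborel \<Otimes>\<^sub>M lborel)"
      by measurable
    show "AE x in lborel. AE y in lborel. fst (x, y) \<noteq> (0::real) \<and> snd (x, y) \<noteq> (0::real)"
      using AE_lborel_singleton[of "0::real"] by eventually_elim (use AE_lborel_singleton[of "0::real"] in auto)
  qed
  then have ae': "AE p in lborel. fst p \<noteq> (0::real) \<and> snd p \<noteq> (0::real)" by (subst (asm) lborel_prod)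
  show "AE p in lborel. norm (exp (- ((fst p)\<^sup>2 + (snd p)\<^sup>2)) / sqrt ((fst p)\<^sup>2 + (snd p)\<^sup>2)) \<le> norm (?g (fst p) * ?g (snd p))"
    using ae'
  proof eventually_elim
    fix p :: "real \<times> real" assume p: "fst p \<noteq> 0 \<and> snd p \<noteq> 0"
    define a where "a = fst p"
    define b where "b = snd p"
    have a: "a \<noteq> 0" and b: "b \<noteq> 0" using p by (auto simp: a_def b_def)
    have h: "2 * \<bar>a\<bar> * \<bar>b\<bar> \<le> a * a + b * b"
      using sum_squares_bound[of "\<bar>a\<bar>" "\<bar>b\<bar>"] by (simp add: power2_eq_square)
    have h0: "0 \<le> \<bar>a\<bar> * \<bar>b\<bar>" by simp
    have "\<bar>a\<bar> * \<bar>b\<bar> \<le> a\<^sup>2 + b\<^sup>2"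
      unfolding power2_eq_square using h h0 by linarith
    then have "sqrt (\<bar>a\<bar> * \<bar>b\<bar>) \<le> sqrt (a\<^sup>2 + b\<^sup>2)" by (rule real_sqrt_le_mono)
    moreover have "0 < sqrt (\<bar>a\<bar> * \<bar>b\<bar>)" using a b by simp
    ultimately have 1: "inverse (sqrt (a\<^sup>2 + b\<^sup>2)) \<le> inverse (sqrt \<bar>a\<bar>) * inverse (sqrt \<bar>b\<bar>)"
      by (simp add: real_sqrt_mult le_imp_inverse_le flip: inverse_mult_distrib)
    have "exp (- (a\<^sup>2 + b\<^sup>2)) / sqrt (a\<^sup>2 + b\<^sup>2) = inverse (sqrt (a\<^sup>2 + b\<^sup>2)) * exp (- (a\<^sup>2 + b\<^sup>2))"
      by (simp add: divide_inverse mult.commute)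
    also have "\<dots> \<le> (inverse (sqrt \<bar>a\<bar>) * inverse (sqrt \<bar>b\<bar>)) * exp (- (a\<^sup>2 + b\<^sup>2))"
      by (intro mult_right_mono 1) simp
    also have "\<dots> = ?g a * ?g b" by (simp add: exp_add[symmetric] exp_diff mult_ac)
    finally show "norm (exp (- ((fst p)\<^sup>2 + (snd p)\<^sup>2)) / sqrt ((fst p)\<^sup>2 + (snd p)\<^sup>2)) \<le> norm (?g (fst p) * ?g (snd p))"
      unfolding a_def[symmetric] b_def[symmetric] by simp
  qed
qed

lemma FTC_Ioi:
  fixes f F :: "real \<Rightarrow> real"
  assumes F: "\<And>x. 1 < x \<Longrightarrow> DERIV F x :> f x" and f: "\<And>x. 1 < x \<Longrightarrow> isCont f x"
    and nn: "\<And>x. 1 < x \<Longrightarrow> 0 \<le> f x"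
    and A: "(F \<longlongrightarrow> A) (at_right 1)" and B: "(F \<longlongrightarrow> B) at_top"
  shows "has_bochner_integral lborel (\<lambda>x. indicator {1<..} x * f x) (B - A)"
proof -
  have p1: "\<And>x. ereal 1 < ereal x \<Longrightarrow> ereal x < \<infinity> \<Longrightarrow> DERIV F x :> f x" using F by simp
  have p2: "\<And>x. ereal 1 < ereal x \<Longrightarrow> ereal x < \<infinity> \<Longrightarrow> isCont f x" using f by simp
  have p3: "AE x in lborel. ereal 1 < ereal x \<longrightarrow> ereal x < \<infinity> \<longrightarrow> 0 \<le> f x" by (intro AE_I2) (simp add: nn)
  have p4: "((F \<circ> real_of_ereal) \<longlongrightarrow> A) (at_right (ereal 1))" using A by (simp add: ereal_tendsto_simps1)
  have p5: "((F \<circ> real_of_ereal) \<longlongrightarrow> B) (at_left \<infinity>)" using B by (simp add: ereal_tendsto_simps1)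
  have lt: "ereal 1 < \<infinity>" by simp
  note R = interval_integral_FTC_nonneg[OF lt p1 p2 p3 p4 p5]
  have ei: "einterval (ereal 1) \<infinity> = {1<..}" by (auto simp: einterval_def)
  have i: "integrable lborel (\<lambda>x. indicator {1<..} x * f x)" using R(1) unfolding ei set_integrable_def by simp
  have "(LBINT x=ereal 1..\<infinity>. f x) = (LINT x:{1<..}|lborel. f x)" by (rule interval_integral_to_infinity_eq)
  then have "integral\<^sup>L lborel (\<lambda>x. indicator {1<..} x * f x) = B - A" using R(2) by (simp add: set_lebesgue_integral_def)
  with i show ?thesis by (simp add: has_bochner_integral_iff)
qed

lemma tendsto_at_right_of_isCont: "isCont f x \<Longrightarrow> (f \<longlongrightarrow> f x) (at_right x)"
  unfolding isCont_def by (rule tendsto_within_subset) auto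

lemma int_exp_Ioi:
  fixes q :: real assumes q: "0 < q"
  shows "has_bochner_integral lborel (\<lambda>t. indicator {1<..} t * exp (- (q * t))) (exp (- q) / q)"
proof -
  define F where "F t = - exp (- (q * t)) / q" for t
  have "has_bochner_integral lborel (\<lambda>t. indicator {1<..} t * exp (- (q * t))) (0 - F 1)"
  proof (rule FTC_Ioi)
    show "DERIV F x :> exp (- (q * x))" for x
      unfolding F_def using q by (auto intro!: derivative_eq_intros)
    show "isCont (\<lambda>t. exp (- (q * t))) x" for x by (intro continuous_intros)
    show "0 \<le> exp (- (q * x))" for x by simp
    show "(F \<longlongrightarrow> F 1) (at_right 1)" unfolding F_def using q by (intro tendsto_at_right_of_isCont continuous_intros) auto
    have *: "((\<lambda>t. exp (- (q * t))) \<longlongrightarrow> 0) at_top"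
      using q by (auto intro!: exp_at_bot[THEN filterlim_compose] filterlim_tendsto_pos_mult_at_top filterlim_ident
             simp: filterlim_uminus_at_bot)
    have "((\<lambda>t. - exp (- (q * t)) / q) \<longlongrightarrow> - 0 / q) at_top"
      by (intro tendsto_divide tendsto_minus * tendsto_const) (use q in auto)
    then show "(F \<longlongrightarrow> 0) at_top" unfolding F_def by simp
  qed
  then show ?thesis by (simp add: F_def)
qed

lemma DERIV_negsum:
  fixes x :: real
  shows "DERIV (\<lambda>x. - (\<Sum>m\<le>k. (x^m * exp (-x)) / fact m)) x :> x^k * exp (-x) / fact k"
proof (induction k)
  case 0 show ?case by (auto intro!: derivative_eq_intros)
next
  case (Suc k)
  have "DERIV (\<lambda>x. (- (\<Sum>m\<le>k. (x^m * exp (-x)) / fact m)) - (x^Suc k * exp (-x)) / fact (Suc k)) x :>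
        x^k * exp (-x) / fact k - ((real (Suc k) - x) * x ^ k * exp (- x)) / (fact (Suc k))"
    by (intro DERIV_diff Suc)
       (auto intro!: derivative_eq_intros simp del: fact_Suc power_Suc
             simp add: field_simps power_Suc[symmetric])
  also have "(\<lambda>x. (- (\<Sum>m\<le>k. (x^m * exp (-x)) / fact m)) - (x^Suc k * exp (-x)) / fact (Suc k)) =
      (\<lambda>x. - (\<Sum>m\<le>Suc k. (x^m * exp (-x)) / fact m))" by simp
  also have "x^k * exp (-x) / fact k - ((real (Suc k) - x) * x ^ k * exp (- x)) / (fact (Suc k)) =
      x^Suc k * exp (-x) / fact (Suc k)"
    by (auto simp: field_simps simp del: fact_Suc) (simp_all add: of_nat_Suc field_simps)
  finally show ?case .
qed

lemma negsum_0: "- (\<Sum>m\<le>k. ((0::real)^m * exp (-0)) / fact m) = -1"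
  by (induction k) auto

lemma int_R:
  fixes a :: real assumes a: "0 < a"
  shows "has_bochner_integral lborel (\<lambda>t. indicator {1<..} t * (exp (- (a / t)) / t ^ (n+2)))
           (fact n / a^(n+1) * (1 - exp (- a) * (\<Sum>k\<le>n. a^k / fact k)))"
proof -
  define c where "c = fact n / a^(n+1)"
  define G where "G u = - (\<Sum>m\<le>n. (u^m * exp (-u)) / fact m)" for u :: real
  define F where "F t = - c * G (a / t)" for t
  have c0: "0 < c" unfolding c_def using a by simp
  have "has_bochner_integral lborel (\<lambda>t. indicator {1<..} t * (exp (- (a / t)) / t ^ (n+2))) (c - F 1)"
  proof (rule FTC_Ioi)
    fix x :: real assume x: "1 < x"
    have d1: "DERIV G (a / x) :> (a/x)^n * exp (-(a/x)) / fact n" unfolding G_def by (rule DERIV_negsum)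
    have d2: "DERIV (\<lambda>t. a / t) x :> - (a / x^2)" using x by (auto intro!: derivative_eq_intros simp: power2_eq_square)
    have d3: "DERIV (\<lambda>t. G (a / t)) x :> (a/x)^n * exp (-(a/x)) / fact n * (- (a / x^2))"
      by (rule DERIV_chain2[OF d1 d2])
    have "DERIV F x :> - c * ((a/x)^n * exp (-(a/x)) / fact n * (- (a / x^2)))"
      unfolding F_def by (intro DERIV_cmult d3)
    moreover have "- c * ((a/x)^n * exp (-(a/x)) / fact n * (- (a / x^2))) = exp (- (a / x)) / x ^ (n+2)"
      using x a unfolding c_def by (simp add: field_simps power2_eq_square power_divide)
    ultimately show "DERIV F x :> exp (- (a / x)) / x ^ (n+2)" by simp
    show "isCont (\<lambda>t. exp (- (a / t)) / t ^ (n+2)) x" using x by (intro continuous_intros) auto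
    show "0 \<le> exp (- (a / x)) / x ^ (n+2)" using x by simp
  next
    have "isCont F 1" unfolding F_def G_def by (intro continuous_intros) auto
    then show "(F \<longlongrightarrow> F 1) (at_right 1)" by (rule tendsto_at_right_of_isCont)
    have "((\<lambda>t. a / t) \<longlongrightarrow> 0) at_top"
      by (intro tendsto_divide_0[OF tendsto_const] filterlim_at_top_imp_at_infinity filterlim_ident)
    moreover have "isCont G 0" unfolding G_def by (intro continuous_intros) auto
    ultimately have "((\<lambda>t. G (a / t)) \<longlongrightarrow> G 0) at_top" using isCont_tendsto_compose by blast
    then have "(F \<longlongrightarrow> - c * G 0) at_top" unfolding F_def by (intro tendsto_mult_left)
    moreover have "G 0 = -1" unfolding G_def by (rule negsum_0)
    ultimately show "(F \<longlongrightarrow> c) at_top" by simp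
  qed
  moreover have "c - F 1 = fact n / a^(n+1) * (1 - exp (- a) * (\<Sum>k\<le>n. a^k / fact k))"
  proof -
    have "(\<Sum>m\<le>n. (a^m * exp (-a)) / fact m) = exp (-a) * (\<Sum>k\<le>n. a^k / fact k)"
      by (simp add: sum_distrib_left mult_ac)
    then show ?thesis unfolding F_def G_def c_def by (simp add: algebra_simps)
  qed
  ultimately show ?thesis by simp
qed

lemma exp_minus_of_real: "exp (w - complex_of_real r) = exp w * complex_of_real (exp (- r))"
proof -
  have "exp (w - of_real r) = exp (w + of_real (-r))" by simp
  also have "\<dots> = exp w * exp (of_real (-r))" by (rule exp_add)
  also have "\<dots> = exp w * of_real (exp (-r))" by (simp only: exp_of_real)
  finally show ?thesis .
qed

lemma symb_eq: "symb n \<xi> = cnj (Complex (fst \<xi>) (snd \<xi>))^n / Complex (fst \<xi>) (snd \<xi>) *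
    complex_of_real (exp (- ((fst \<xi>)\<^sup>2 + (snd \<xi>)\<^sup>2)))"
  by (cases \<xi>) (simp add: symb_def)

lemma alg1:
  fixes c w E R :: complex
  assumes "c \<noteq> 0" "w \<noteq> 0"
  shows "c ^ Suc n * E * (R / (w * c)) = c ^ n / w * R * E"
  using assms by (simp add: field_simps)

lemma inv_fourier2_formula:
  fixes n :: nat and x y :: real
  defines "a \<equiv> (x\<^sup>2 + y\<^sup>2) / 4"
  shows "inv_fourier2 (symb n) x y = (if a = 0 then 0 else
           of_real (1/(2*pi)) * (of_real pi * (\<i> * cnj (Complex x y) / 2)^(Suc n) *
             of_real (fact n / a^(n+1) * (1 - exp (- a) * (\<Sum>k\<le>n. a^k / fact k)))))"
proof -
  define X where "X \<xi> = cnj (Complex (fst \<xi>) (snd \<xi>))" for \<xi> :: "real\<times>real"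
  define N2 where "N2 \<xi> = (fst \<xi>)\<^sup>2 + (snd \<xi>)\<^sup>2" for \<xi> :: "real\<times>real"
  define L where "L \<xi> = fst \<xi> * x + snd \<xi> * y" for \<xi> :: "real\<times>real"
  define h where "h \<xi> t = indicator {1<..} t *\<^sub>R (X \<xi> ^ Suc n * exp (\<i> * of_real (L \<xi>) - of_real (t * N2 \<xi>)))"
    for \<xi> :: "real\<times>real" and t :: real
  have Xeq: "X = (\<lambda>p. of_real (fst p) - \<i> * of_real (snd p))" unfolding X_def by (auto simp: complex_eq_iff)
  have mX[measurable]: "X \<in> borel_measurable lborel"
    unfolding Xeq by (simp only: measurable_lborel2, intro borel_measurable_continuous_onI continuous_intros)
  have mN2[measurable]: "N2 \<in> borel_measurable lborel"
    unfolding N2_def by (simp only: measurable_lborel2, intro borel_measurable_continuous_onI continuous_intros)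
  have mL[measurable]: "L \<in> borel_measurable lborel"
    unfolding L_def by (simp only: measurable_lborel2, intro borel_measurable_continuous_onI continuous_intros)
  have nX: "norm (X \<xi>) = sqrt (N2 \<xi>)" for \<xi> unfolding X_def N2_def by (simp add: complex_norm)
  have N2nn: "0 \<le> N2 \<xi>" for \<xi> unfolding N2_def by simp
  have X0: "X \<xi> = 0" if "N2 \<xi> = 0" for \<xi>
    using that unfolding X_def N2_def by (auto simp: complex_eq_iff)
  have hsplit: "h \<xi> t = (X \<xi> ^ Suc n * exp (\<i> * of_real (L \<xi>))) * of_real (indicator {1<..} t * exp (- (N2 \<xi> * t)))"
    for \<xi> t unfolding h_def exp_minus_of_real by (simp add: scaleR_conv_of_real mult_ac)
  have hint: "has_bochner_integral lborel (h \<xi>) ((X \<xi> ^ Suc n * exp (\<i> * of_real (L \<xi>))) * of_real (exp (- N2 \<xi>) / N2 \<xi>))"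
    if "0 < N2 \<xi>" for \<xi>
  proof -
    have "has_bochner_integral lborel (\<lambda>t. (X \<xi> ^ Suc n * exp (\<i> * of_real (L \<xi>))) * of_real (indicator {1<..} t * exp (- (N2 \<xi> * t))))
       ((X \<xi> ^ Suc n * exp (\<i> * of_real (L \<xi>))) * of_real (exp (- N2 \<xi>) / N2 \<xi>))"
      by (intro has_bochner_integral_mult_right has_bochner_integral_of_real int_exp_Ioi that)
    then show ?thesis by (simp only: hsplit[symmetric])
  qed
  have hzero: "h \<xi> = (\<lambda>t. 0)" if "N2 \<xi> = 0" for \<xi>
    using X0[OF that] by (intro ext) (simp add: h_def)
  have nh: "norm (h \<xi> t) = sqrt (N2 \<xi>) ^ Suc n * (indicator {1<..} t * exp (- (N2 \<xi> * t)))" for \<xi> t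
    unfolding hsplit by (simp add: norm_mult norm_power nX)
  define K where "K \<xi> = sqrt (N2 \<xi>) ^ Suc n * (exp (- N2 \<xi>) / N2 \<xi>)" for \<xi>
  have intnh: "(\<integral>t. norm (h \<xi> t) \<partial>lborel) = K \<xi>" for \<xi>
  proof (cases "N2 \<xi> = 0")
    case True then show ?thesis by (simp add: hzero K_def)
  next
    case False
    then have "0 < N2 \<xi>" using N2nn[of \<xi>] by simp
    from int_exp_Ioi[OF this] show ?thesis
      unfolding nh K_def by (simp add: has_bochner_integral_iff)
  qed
  have iK: "integrable lborel K"
  proof (rule Bochner_Integration.integrable_bound)
    define D where "D p = exp (1 * (\<bar>fst p\<bar> + \<bar>snd p\<bar>)) * exp (- (1 * ((fst p)\<^sup>2 + (snd p)\<^sup>2)))" for p :: "real\<times>real"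
    have iD: "integrable lborel D" unfolding D_def by (rule dom_integrable) auto
    show "integrable lborel (\<lambda>p. exp (- ((fst p)\<^sup>2 + (snd p)\<^sup>2)) / sqrt ((fst p)\<^sup>2 + (snd p)\<^sup>2) + fact n * D p)"
      by (intro Bochner_Integration.integrable_add integrable_Q integrable_mult_right iD)
    show "K \<in> borel_measurable lborel" unfolding K_def by measurable
    show "AE p in lborel. norm (K p) \<le> norm (exp (- ((fst p)\<^sup>2 + (snd p)\<^sup>2)) / sqrt ((fst p)\<^sup>2 + (snd p)\<^sup>2) + fact n * D p)"
    proof (intro AE_I2)
      fix p :: "real \<times> real"
      define r where "r = sqrt (N2 p)"
      define e where "e = exp (- N2 p)"
      have r0: "0 \<le> r" and e0: "0 < e" using N2nn[of p] by (auto simp: r_def e_def)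
      have rr: "r^2 = N2 p" using N2nn[of p] by (simp add: r_def)
      have Kp: "K p = r ^ Suc n * (e / r^2)" unfolding K_def r_def e_def using N2nn[of p] by simp
      have "r ^ Suc n * (e / r^2) \<le> e / r + r^n * e"
      proof (cases "r = 0")
        case True then show ?thesis using e0 by simp
      next
        case False
        then have rp: "0 < r" using r0 by simp
        show ?thesis
        proof (cases "r \<le> 1")
          case True
          have "r ^ Suc n \<le> r" using True rp by (simp add: power_le_one mult_left_le)
          then have "r ^ Suc n * (e / r^2) \<le> r * (e / r^2)" using e0 rp by (intro mult_right_mono) auto
          also have "\<dots> = e / r" using rp by (simp add: power2_eq_square)
          finally show ?thesis using r0 e0 by (smt (verit) mult_nonneg_nonneg zero_le_power)
        next
          case False
          have nn0: "0 \<le> r^n * e" using rp e0 by simp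
          have "r ^ Suc n * (e / r^2) = r^n * e / r" using rp by (simp add: power2_eq_square field_simps)
          also have "\<dots> \<le> r^n * e" using False nn0 rp by (simp add: divide_le_eq mult_le_cancel_left1)
          finally show ?thesis using rp e0 by (smt (verit) divide_nonneg_pos less_imp_le)
        qed
      qed
      moreover have "r^n * e \<le> fact n * D p"
      proof -
        have "r \<le> \<bar>fst p\<bar> + \<bar>snd p\<bar>"
          using nX[of p] cmod_Complex_le[of "fst p" "snd p"] by (simp add: r_def X_def)
        then have "r^n \<le> fact n * exp (\<bar>fst p\<bar> + \<bar>snd p\<bar>)"
          using pow_le_fact_exp[OF r0, of n] r0 by (smt (verit) exp_le_cancel_iff fact_gt_zero mult_left_mono)
        then have "r^n * e \<le> fact n * exp (\<bar>fst p\<bar> + \<bar>snd p\<bar>) * e" using e0 by (intro mult_right_mono) auto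
        then show ?thesis by (simp add: D_def e_def N2_def)
      qed
      ultimately have "K p \<le> e / r + fact n * D p" unfolding Kp by linarith
      moreover have "0 \<le> K p" unfolding Kp using r0 e0 by simp
      moreover have "e / r = exp (- ((fst p)\<^sup>2 + (snd p)\<^sup>2)) / sqrt ((fst p)\<^sup>2 + (snd p)\<^sup>2)"
        by (simp add: e_def r_def N2_def)
      moreover have "0 \<le> fact n * D p" by (simp add: D_def)
      ultimately show "norm (K p) \<le> norm (exp (- ((fst p)\<^sup>2 + (snd p)\<^sup>2)) / sqrt ((fst p)\<^sup>2 + (snd p)\<^sup>2) + fact n * D p)"
        using r0 e0 by simp
    qed
  qed
  have integ: "integrable (lborel \<Otimes>\<^sub>M lborel) (case_prod h)"
  proof (rule lborel_pair.Fubini_integrable)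
    show "case_prod h \<in> borel_measurable (lborel \<Otimes>\<^sub>M lborel)" unfolding h_def by measurable
    show "integrable lborel (\<lambda>\<xi>. \<integral>t. norm (case_prod h (\<xi>, t)) \<partial>lborel)"
      using iK by (simp add: intnh)
    show "AE \<xi> in lborel. integrable lborel (\<lambda>t. case_prod h (\<xi>, t))"
    proof (intro AE_I2)
      fix \<xi> :: "real\<times>real"
      show "integrable lborel (\<lambda>t. case_prod h (\<xi>, t))"
      proof (cases "N2 \<xi> = 0")
        case True then show ?thesis by (simp add: hzero)
      next
        case False
        then have "0 < N2 \<xi>" using N2nn[of \<xi>] by simp
        from hint[OF this] show ?thesis by (simp add: has_bochner_integral_iff)
      qed
    qed
  qed
  note FUB = lborel_pair.Fubini_integral[OF integ]
  have RHS: "(\<lambda>(\<xi>1, \<xi>2). symb n (\<xi>1, \<xi>2) * exp (\<i> * complex_of_real (\<xi>1 * x + \<xi>2 * y))) = (\<lambda>\<xi>. \<integral>t. h \<xi> t \<partial>lborel)"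
  proof (rule ext, clarify)
    fix \<xi>1 \<xi>2 :: real
    show "symb n (\<xi>1, \<xi>2) * exp (\<i> * complex_of_real (\<xi>1 * x + \<xi>2 * y)) = (\<integral>t. h (\<xi>1, \<xi>2) t \<partial>lborel)"
    proof (cases "N2 (\<xi>1, \<xi>2) = 0")
      case True
      then have "\<xi>1 = 0" "\<xi>2 = 0" by (auto simp: N2_def)
      moreover have "Complex 0 0 = 0" by (simp add: complex_eq_iff)
      ultimately show ?thesis using hzero[OF True] by (simp add: symb_def)
    next
      case False
      then have pos: "0 < N2 (\<xi>1, \<xi>2)" using N2nn[of "(\<xi>1, \<xi>2)"] by simp
      define w where "w = Complex \<xi>1 \<xi>2"
      have w0: "w \<noteq> 0" and cw0: "cnj w \<noteq> 0" using False by (auto simp: N2_def complex_eq_iff w_def)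
      have cn: "complex_of_real (N2 (\<xi>1, \<xi>2)) = w * cnj w" by (simp add: complex_mult_cnj N2_def w_def)
      have eqX: "X (\<xi>1,\<xi>2) = cnj w" by (simp add: X_def w_def)
      have eqL: "L (\<xi>1,\<xi>2) = \<xi>1 * x + \<xi>2 * y" by (simp add: L_def)
      have eqS: "symb n (\<xi>1,\<xi>2) = cnj w ^ n / w * of_real (exp (- N2 (\<xi>1,\<xi>2)))"
        by (simp add: symb_def w_def N2_def)
      have "(\<integral>t. h (\<xi>1, \<xi>2) t \<partial>lborel) = X (\<xi>1, \<xi>2) ^ Suc n * exp (\<i> * of_real (L (\<xi>1, \<xi>2))) *
          of_real (exp (- N2 (\<xi>1, \<xi>2)) / N2 (\<xi>1, \<xi>2))"
        using hint[OF pos] by (simp add: has_bochner_integral_iff)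
      also have "\<dots> = cnj w ^ Suc n * exp (\<i> * of_real (\<xi>1 * x + \<xi>2 * y)) * (of_real (exp (- N2 (\<xi>1, \<xi>2))) / (w * cnj w))"
        unfolding eqX eqL of_real_divide cn ..
      also have "\<dots> = cnj w ^ n / w * of_real (exp (- N2 (\<xi>1, \<xi>2))) * exp (\<i> * of_real (\<xi>1 * x + \<xi>2 * y))"
        using alg1[OF cw0 w0] .
      also have "\<dots> = symb n (\<xi>1, \<xi>2) * exp (\<i> * complex_of_real (\<xi>1 * x + \<xi>2 * y))"
        unfolding eqS ..
      finally show ?thesis by simp
    qed
  qed
  have inv_eq: "inv_fourier2 (symb n) x y = of_real (1/(2*pi)) * (\<integral>\<xi>. (\<integral>t. h \<xi> t \<partial>lborel) \<partial>lborel)"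
    unfolding inv_fourier2_def RHS ..
  define \<beta> where "\<beta> = \<i> * cnj (Complex x y) / 2"
  have W: "(\<integral>\<xi>. h \<xi> t \<partial>lborel) = of_real pi * \<beta>^(Suc n) * of_real (indicator {1<..} t * (exp (- (a / t)) / t^(n+2)))" for t
  proof (cases "1 < t")
    case True
    then have t0: "0 < t" by simp
    have "(\<lambda>\<xi>. h \<xi> t) = (\<lambda>p::real\<times>real. cnj (Complex (fst p) (snd p))^(Suc n) *
            exp (\<i> * of_real (fst p * x + snd p * y) - of_real (t * ((fst p)\<^sup>2 + (snd p)\<^sup>2))))"
      using True by (simp add: h_def X_def L_def N2_def)
    then have "(\<integral>\<xi>. h \<xi> t \<partial>lborel) = of_real (pi/t) * exp (- of_real ((x\<^sup>2+y\<^sup>2)/(4 * t))) * (\<i> * cnj (Complex x y) / of_real (2 * t))^(Suc n)"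
      using gauss2d_poly[OF t0, where x=x and y=y and m="Suc n"] by (simp add: has_bochner_integral_iff)
    also have "exp (- complex_of_real ((x\<^sup>2+y\<^sup>2)/(4 * t))) = of_real (exp (- (a / t)))"
      by (simp add: a_def exp_of_real[symmetric])
    also have "(\<i> * cnj (Complex x y) / of_real (2 * t))^(Suc n) = \<beta>^(Suc n) / of_real t^(Suc n)"
      by (simp add: \<beta>_def power_divide)
    finally show ?thesis using t0 True by (simp add: field_simps)
  next
    case False
    then have "(\<lambda>\<xi>. h \<xi> t) = (\<lambda>\<xi>. 0)" by (simp add: h_def)
    then show ?thesis using False by simp
  qed
  have inv2: "inv_fourier2 (symb n) x y = of_real (1/(2*pi)) * (of_real pi * \<beta>^(Suc n) *
      of_real (\<integral>t. indicator {1<..} t * (exp (- (a / t)) / t^(n+2)) \<partial>lborel))"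
    unfolding inv_eq FUB[symmetric] W integral_mult_right_zero integral_complex_of_real ..
  show ?thesis
  proof (cases "a = 0")
    case True
    then have "x = 0" "y = 0" by (auto simp: a_def)
    then have "\<beta> = 0" by (simp add: \<beta>_def complex_eq_iff)
    then show ?thesis using inv2 True by simp
  next
    case False
    have "0 \<le> a" unfolding a_def by simp
    then have "0 < a" using False by simp
    from int_R[OF this, of n] inv2 False show ?thesis by (simp add: has_bochner_integral_iff \<beta>_def)
  qed
qed

lemma alg2:
  fixes z c F Y :: complex and n :: nat
  assumes z: "z \<noteq> 0" and c: "c \<noteq> 0"
  shows "of_real (1/(2*pi)) * (of_real pi * (\<i> * c / 2)^(Suc n) * (F / (z * c / 4)^(Suc n) * Y))
       = \<i> * (2 * \<i>)^n * F / z^(Suc n) * Y"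
proof -
  have p: "complex_of_real pi \<noteq> 0" by simp
  have 4: "(4::complex)^k = 2^k * 2^k" for k by (simp flip: power_mult_distrib)
  have "(\<i> * c / 2)^(Suc n) / (z * c / 4)^(Suc n) = (2 * \<i>)^(Suc n) / z^(Suc n)"
    using z c by (simp add: power_divide power_mult_distrib 4 field_simps)
  moreover have "(2 * \<i>)^(Suc n) = 2 * \<i> * (2*\<i>)^n" by simp
  ultimately show ?thesis using z c p
    by (simp add: field_simps)
qed

lemma a_eq:
  fixes x y :: real
  shows "complex_of_real ((x\<^sup>2 + y\<^sup>2) / 4) = Complex x y * cnj (Complex x y) / 4"
  by (simp add: complex_mult_cnj)

lemma cmod_sq: "(cmod (Complex x y))\<^sup>2 = x\<^sup>2 + y\<^sup>2"
  by (simp add: complex_norm)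

lemma t1:
  fixes zz :: complex and a :: real
  assumes aeq: "complex_of_real a = zz * cnj zz / 4"
  shows "(\<Sum>k = 0..n. 1 / of_nat (fact k) * (zz * cnj zz / 4) ^ k) = complex_of_real (\<Sum>k\<le>n. a^k / fact k)"
proof -
  have "(\<Sum>k = 0..n. 1 / of_nat (fact k) * (zz * cnj zz / 4) ^ k) = (\<Sum>k\<le>n. 1 / of_nat (fact k) * (complex_of_real a) ^ k)"
    unfolding aeq atLeast0AtMost ..
  also have "\<dots> = complex_of_real (\<Sum>k\<le>n. a^k / fact k)"
    by (simp add: divide_inverse mult.commute)
  finally show ?thesis .
qed

lemma t2:
  fixes zz :: complex and a Y :: real
  assumes aeq: "complex_of_real a = zz * cnj zz / 4"
  shows "complex_of_real (fact n / a^(n+1) * Y) = of_nat (fact n) / (zz * cnj zz / 4)^(Suc n) * complex_of_real Y"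
proof -
  have "complex_of_real (fact n / a^(n+1) * Y) = of_nat (fact n) / (complex_of_real a)^(Suc n) * complex_of_real Y"
    by simp
  then show ?thesis unfolding aeq .
qed

lemma t3:
  fixes zz :: complex and a Y :: real
  assumes aeq: "complex_of_real a = zz * cnj zz / 4" and E: "exp (- (cmod zz)\<^sup>2 / 4) = exp (- a)"
  shows "1 - complex_of_real (exp (- (cmod zz)\<^sup>2 / 4)) * (\<Sum>k = 0..n. 1 / of_nat (fact k) * (zz * cnj zz / 4) ^ k)
    = complex_of_real (1 - exp (- a) * (\<Sum>k\<le>n. a^k / fact k))"
  unfolding t1[OF aeq] E by simp

lemma t4:
  fixes zz c A B T :: complex
  assumes "zz \<noteq> 0"
  shows "A / zz^(n+1) * (B * (zz * c / 4)^(n+1) * T) = A * B * (c / 4)^(n+1) * T"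
proof -
  have "(zz * c / 4)^(n+1) = zz^(n+1) * (c/4)^(n+1)" by (simp add: power_mult_distrib[symmetric])
  then show ?thesis using assms by (simp add: field_simps)
qed

lemma t5:
  fixes a S :: real
  assumes "a \<noteq> 0"
  shows "1 - exp (- a) * S = exp (- a) * a^(n+1) * ((exp a - S) / a^(n+1))"
proof -
  have "exp (- a) * a^(n+1) * ((exp a - S) / a^(n+1)) = exp (- a) * (exp a - S)" using assms by simp
  also have "\<dots> = exp (-a) * exp a - exp (-a) * S" by (simp add: algebra_simps)
  also have "exp (-a) * exp a = 1" by (simp add: exp_minus_inverse mult.commute)
  finally show ?thesis by simp
qed


lemma t6: "1 / of_nat (fact m) * (complex_of_real a)^k = complex_of_real (a^k / fact m)"
  by (simp add: divide_inverse mult.commute)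

lemma main2:
  fixes x y :: real and n :: nat
  assumes z: "Complex x y \<noteq> 0"
  shows "inv_fourier2 (symb n) x y = \<i> * (2 * \<i>) ^ n * of_nat (fact n) / (Complex x y) ^ (n + 1) *
              (1 - complex_of_real (exp (- (cmod (Complex x y))\<^sup>2 / 4)) *
                   (\<Sum>k = 0..n. 1 / of_nat (fact k) * (Complex x y * cnj (Complex x y) / 4) ^ k))"
proof -
  define a where "a = (x\<^sup>2 + y\<^sup>2) / 4"
  define zz where "zz = Complex x y"
  have a0: "a \<noteq> 0" using z by (auto simp: a_def complex_eq_iff)
  have c0: "cnj zz \<noteq> 0" using z by (simp add: zz_def)
  have aeq: "complex_of_real a = zz * cnj zz / 4" unfolding a_def zz_def by (rule a_eq)
  have E: "exp (- (cmod zz)\<^sup>2 / 4) = exp (- a)"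
  proof -
    have "- (cmod zz)\<^sup>2 / 4 = - a" unfolding zz_def cmod_sq a_def by linarith
    then show ?thesis by simp
  qed
  have F: "inv_fourier2 (symb n) x y = (if a = 0 then 0 else
           of_real (1/(2*pi)) * (of_real pi * (\<i> * cnj zz / 2)^(Suc n) *
             of_real (fact n / a^(n+1) * (1 - exp (- a) * (\<Sum>k\<le>n. a^k / fact k)))))"
    unfolding a_def zz_def by (rule inv_fourier2_formula)
  have "inv_fourier2 (symb n) x y = of_real (1/(2*pi)) * (of_real pi * (\<i> * cnj zz / 2)^(Suc n) *
             of_real (fact n / a^(n+1) * (1 - exp (- a) * (\<Sum>k\<le>n. a^k / fact k))))"
    using F unfolding if_not_P[OF a0] .
  also have "\<dots> = of_real (1/(2*pi)) * (of_real pi * (\<i> * cnj zz / 2)^(Suc n) *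
             (of_nat (fact n) / (zz * cnj zz / 4)^(Suc n) * of_real (1 - exp (- a) * (\<Sum>k\<le>n. a^k / fact k))))"
    unfolding t2[OF aeq] ..
  also have "\<dots> = \<i> * (2 * \<i>)^n * of_nat (fact n) / zz^(Suc n) * of_real (1 - exp (- a) * (\<Sum>k\<le>n. a^k / fact k))"
    by (rule alg2[OF z[folded zz_def] c0])
  also have "\<dots> = \<i> * (2 * \<i>) ^ n * of_nat (fact n) / zz ^ (n + 1) *
              (1 - complex_of_real (exp (- (cmod zz)\<^sup>2 / 4)) *
                   (\<Sum>k = 0..n. 1 / of_nat (fact k) * (zz * cnj zz / 4) ^ k))"
    unfolding t3[OF aeq E] Suc_eq_plus1 ..
  finally show ?thesis unfolding zz_def .
qed

lemma series_id:
  fixes a :: real and n :: nat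
  assumes a: "a \<noteq> 0"
  shows "(\<lambda>k. a^k / fact (k + n + 1)) sums ((exp a - (\<Sum>k\<le>n. a^k / fact k)) / a^(n+1))"
proof -
  have "(\<lambda>k. a^k / fact k) sums exp a" using exp_converges[of a] by (simp add: divide_inverse mult.commute)
  then have "(\<lambda>k. a^(k + Suc n) / fact (k + Suc n)) sums (exp a - (\<Sum>k<Suc n. a^k / fact k))"
    by (rule sums_split_initial_segment)
  then have "(\<lambda>k. a^(k + Suc n) / fact (k + Suc n) / a^(n+1)) sums ((exp a - (\<Sum>k<Suc n. a^k / fact k)) / a^(n+1))"
    by (rule sums_divide)
  moreover have "(\<lambda>k. a^(k + Suc n) / fact (k + Suc n) / a^(n+1)) = (\<lambda>k. a^k / fact (k + n + 1))"
  proof (rule ext)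
    fix k
    have 1: "a^(k + Suc n) = a^k * a^(n+1)" by (simp add: power_add)
    have 2: "fact (k + Suc n) = (fact (k + n + 1) :: real)" by simp
    have 3: "c * b / F / b = c / F" if "b \<noteq> 0" for b c F :: real
      using that by (cases "F = 0") (simp_all add: field_simps)
    show "a^(k + Suc n) / fact (k + Suc n) / a^(n+1) = a^k / fact (k + n + 1)"
      unfolding 1 2 using a by (intro 3) simp
  qed
  ultimately show ?thesis by (simp add: lessThan_Suc_atMost)
qed

lemma main3:
  fixes x y :: real and n :: nat
  shows "inv_fourier2 (symb n) x y = \<i> * (2 * \<i>) ^ n * of_nat (fact n) * complex_of_real (exp (- (cmod (Complex x y))\<^sup>2 / 4)) *
              (cnj (Complex x y) / 4) ^ (n + 1) *
              (\<Sum>k. 1 / of_nat (fact (k + n + 1)) * (Complex x y * cnj (Complex x y) / 4) ^ k)"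
proof (cases "Complex x y = 0")
  case True
  then have xy: "x = 0" "y = 0" by (auto simp: complex_eq_iff)
  have "inv_fourier2 (symb n) x y = 0"
    using inv_fourier2_formula[of n x y] xy by simp
  moreover have "cnj (Complex x y) = 0" using True by simp
  ultimately show ?thesis by simp
next
  case False
  define a where "a = (x\<^sup>2 + y\<^sup>2) / 4"
  define zz where "zz = Complex x y"
  have z: "zz \<noteq> 0" using False by (simp add: zz_def)
  have a0: "a \<noteq> 0" using False by (auto simp: a_def complex_eq_iff)
  have aeq: "complex_of_real a = zz * cnj zz / 4" unfolding a_def zz_def by (rule a_eq)
  have E: "exp (- (cmod zz)\<^sup>2 / 4) = exp (- a)"
  proof -
    have "- (cmod zz)\<^sup>2 / 4 = - a" unfolding zz_def cmod_sq a_def by linarith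
    then show ?thesis by simp
  qed
  define T where "T = (exp a - (\<Sum>k\<le>n. a^k / fact k)) / a^(n+1)"
  have Ts: "(\<lambda>k. complex_of_real (a^k / fact (k + n + 1))) sums complex_of_real T"
    unfolding T_def by (intro sums_of_real series_id a0)
  have Tc: "(\<Sum>k. 1 / of_nat (fact (k + n + 1)) * (zz * cnj zz / 4) ^ k) = complex_of_real T"
  proof -
    have "(\<lambda>k. 1 / of_nat (fact (k + n + 1)) * (zz * cnj zz / 4) ^ k) = (\<lambda>k. 1 / of_nat (fact (k + n + 1)) * (complex_of_real a) ^ k)"
      unfolding aeq ..
    also have "\<dots> = (\<lambda>k. complex_of_real (a^k / fact (k + n + 1)))"
      by (simp only: t6)
    finally show ?thesis using Ts by (simp add: sums_iff)
  qed
  have key: "1 - exp (- a) * (\<Sum>k\<le>n. a^k / fact k) = exp (- a) * a^(n+1) * T"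
    unfolding T_def by (rule t5[OF a0])
  have "inv_fourier2 (symb n) x y = \<i> * (2 * \<i>) ^ n * of_nat (fact n) / zz ^ (n + 1) *
              (1 - complex_of_real (exp (- (cmod zz)\<^sup>2 / 4)) *
                   (\<Sum>k = 0..n. 1 / of_nat (fact k) * (zz * cnj zz / 4) ^ k))"
    using main2[OF False] unfolding zz_def .
  also have "(1 - complex_of_real (exp (- (cmod zz)\<^sup>2 / 4)) *
                   (\<Sum>k = 0..n. 1 / of_nat (fact k) * (zz * cnj zz / 4) ^ k)) = complex_of_real (1 - exp (- a) * (\<Sum>k\<le>n. a^k / fact k))"
    by (rule t3[OF aeq E])
  also have "\<dots> = complex_of_real (exp (- a)) * (complex_of_real a)^(n+1) * complex_of_real T"
    unfolding key by simp
  also have "\<dots> = complex_of_real (exp (- a)) * (zz * cnj zz / 4)^(n+1) * complex_of_real T"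
    unfolding aeq ..
  also have "\<i> * (2 * \<i>) ^ n * of_nat (fact n) / zz ^ (n + 1) * (complex_of_real (exp (- a)) * (zz * cnj zz / 4)^(n+1) * complex_of_real T)
     = \<i> * (2 * \<i>) ^ n * of_nat (fact n) * complex_of_real (exp (- a)) * (cnj zz / 4) ^ (n + 1) * complex_of_real T"
    by (rule t4[OF z])
  finally show ?thesis unfolding Tc[symmetric] E[symmetric] zz_def .
qed

lemma main1:
  fixes x y :: real
  assumes z: "Complex x y \<noteq> 0"
  shows "inv_fourier2 (\<lambda>(\<xi>1, \<xi>2). 1 / Complex \<xi>1 \<xi>2 * complex_of_real (exp (- (\<xi>1\<^sup>2 + \<xi>2\<^sup>2)))) x y
           = \<i> / Complex x y * (1 - complex_of_real (exp (- (x\<^sup>2 + y\<^sup>2) / 4)))"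
proof -
  have s0: "(\<lambda>(\<xi>1, \<xi>2). 1 / Complex \<xi>1 \<xi>2 * complex_of_real (exp (- (\<xi>1\<^sup>2 + \<xi>2\<^sup>2)))) = symb 0"
    unfolding symb_def by simp
  show ?thesis unfolding s0 using main2[OF z, of 0] by (simp add: cmod_sq)
qed

theorem mainTheorem2:
  shows "(\<forall>x y::real. Complex x y \<noteq> 0 \<longrightarrow>
           inv_fourier2 (\<lambda>(\<xi>1, \<xi>2). 1 / Complex \<xi>1 \<xi>2 * complex_of_real (exp (- (\<xi>1\<^sup>2 + \<xi>2\<^sup>2)))) x y
           = \<i> / Complex x y * (1 - complex_of_real (exp (- (x\<^sup>2 + y\<^sup>2) / 4)))) \<and>
          (\<forall>(n::nat) (x::real) (y::real). Complex x y \<noteq> 0 \<longrightarrow>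
           (let z = Complex x y in
            inv_fourier2 (symb n) x y
            = \<i> * (2 * \<i>) ^ n * of_nat (fact n) / z ^ (n + 1) *
              (1 - complex_of_real (exp (- (cmod z)\<^sup>2 / 4)) *
                   (\<Sum>k = 0..n. 1 / of_nat (fact k) * (z * cnj z / 4) ^ k)))) \<and>
          (\<forall>(n::nat) (x::real) (y::real).
           (let z = Complex x y in
            inv_fourier2 (symb n) x y
            = \<i> * (2 * \<i>) ^ n * of_nat (fact n) * complex_of_real (exp (- (cmod z)\<^sup>2 / 4)) *
              (cnj z / 4) ^ (n + 1) *
              (\<Sum>k. 1 / of_nat (fact (k + n + 1)) * (z * cnj z / 4) ^ k)))"
  unfolding Let_def using main1 main2 main3 by blast

end
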